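(* Let $p$ be an odd prime and let $q\in\mathbb C_p$ with $|1-q|_p<p^{-1/(p-1)}$. For every $n\in\mathbb Z_+$, $$\sum_{m=0}^n\binom nm(q-1)^mE_{m,q}=\sum_{m=0}^n\sum_{k=m}^n(q-1)^k\binom nk_q s_{1,q}(k,m)E_{m,q}.$$
   Context: For $x\in\mathbb Z_p$, $[x]_q=\frac{1-q^x}{1-q}$. The fermionic $p$-adic integral of a uniformly differentiable $f:\mathbb Z_p\to\mathbb C_p$ is $\int_{\mathbb Z_p}f(x)\,d\mu_{-1}(x)=\lim_{N\to\infty}\sum_{x=0}^{p^N-1}f(x)(-1)^x$. The $q$-Euler numbers are $E_{n,q}=\int_{\mathbb Z_p}[x]_q^n\,d\mu_{-1}(x)$. $[n]_q!=[n]_q\cdots[1]_q$ ($[0]_q!=1$), $\binom nk_q=\frac{[n]_q!}{[k]_q![n-k]_q!}$. The $q$-Stirling numbers of the first kind $s_{1,q}(k,l)$ are defined by $[x]_q[x-1]_q\cdots[x-k+1]_q=q^{-\binom k2}\sum_{l=0}^k s_{1,q}(k,l)[x]_q^l$ for $k\in\mathbb Z_+$, as an identity of polynomials in $[x]_q$ (using $[x-i]_q=q^{-i}([x]_q-[i]_q)$). *)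

theory Defs
  imports Complex_Main "HOL-Computational_Algebra.Polynomial"
begin

text \<open>Abstract characterisation of C_p: a field with an absolute value nabs that is
  non-archimedean, restricts to the p-adic absolute value (nabs p = 1/p), is complete,
  algebraically closed, and in which the algebraic numbers (over Q) are dense.
  Such a field is isometrically isomorphic to C_p.\<close>
definition is_Cp :: "('a::field \<Rightarrow> real) \<Rightarrow> nat \<Rightarrow> bool" where
  "is_Cp nabs p \<longleftrightarrow>
     (\<forall>x. 0 \<le> nabs x) \<and> (\<forall>x. nabs x = 0 \<longleftrightarrow> x = 0) \<and>
     (\<forall>x y. nabs (x * y) = nabs x * nabs y) \<and>
     (\<forall>x y. nabs (x + y) \<le> max (nabs x) (nabs y)) \<and>
     nabs (of_nat p) = 1 / real p \<and>
     (\<forall>X::nat \<Rightarrow> 'a. (\<forall>e>0. \<exists>M. \<forall>m\<ge>M. \<forall>n\<ge>M. nabs (X m - X n) < e)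
        \<longrightarrow> (\<exists>L. (\<lambda>n. nabs (X n - L)) \<longlonglongrightarrow> 0)) \<and>
     (\<forall>P::'a poly. 1 \<le> degree P \<longrightarrow> (\<exists>x. poly P x = 0)) \<and>
     (\<forall>x. \<forall>e>0. \<exists>a. (\<exists>P::int poly. P \<noteq> 0 \<and> poly (map_poly of_int P) a = 0)
                    \<and> nabs (x - a) < e)"

definition qint :: "'a::field \<Rightarrow> nat \<Rightarrow> 'a" where
  "qint q x = (if q = 1 then of_nat x else (1 - q ^ x) / (1 - q))"

definition qfact :: "'a::field \<Rightarrow> nat \<Rightarrow> 'a" where
  "qfact q n = (\<Prod>i = 1..n. qint q i)"

definition qbinom :: "'a::field \<Rightarrow> nat \<Rightarrow> nat \<Rightarrow> 'a" where
  "qbinom q n k = qfact q n / (qfact q k * qfact q (n - k))"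

text \<open>q-Stirling numbers of the first kind: since [x-i]_q = q^(-i)([x]_q - [i]_q),
  the defining identity [x]_q...[x-k+1]_q = q^(-binom k 2) sum_l s(k,l) [x]_q^l says
  that s(k,l) is the coefficient of t^l in prod_(i<k) (t - [i]_q).\<close>
definition s1q :: "'a::field \<Rightarrow> nat \<Rightarrow> nat \<Rightarrow> 'a" where
  "s1q q k l = coeff (\<Prod>i<k. [: - qint q i, 1 :]) l"

text \<open>Fermionic p-adic integral; the limit only involves values at natural numbers.\<close>
definition fermionic_int :: "('a::field \<Rightarrow> real) \<Rightarrow> nat \<Rightarrow> (nat \<Rightarrow> 'a) \<Rightarrow> 'a" where
  "fermionic_int nabs p f =
     (THE L. (\<lambda>N. nabs ((\<Sum>x<p ^ N. f x * (-1) ^ x) - L)) \<longlonglongrightarrow> 0)"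

definition qEuler :: "('a::field \<Rightarrow> real) \<Rightarrow> nat \<Rightarrow> 'a \<Rightarrow> nat \<Rightarrow> 'a" where
  "qEuler nabs p q m = fermionic_int nabs p (\<lambda>x. qint q x ^ m)"

end

theory Submission
  imports Defs
begin


lemma qint_geom: "qint q x = (\<Sum>j<x. q ^ j)"
  by (simp add: qint_def sum_gp_strict)

lemma qfact_Suc: "qfact q (Suc n) = qfact q n * qint q (Suc n)"
  by (simp add: qfact_def)

lemma qint_add: "qint q (a + b) = qint q a + q ^ a * qint q b"
  unfolding qint_geom by (induction b) (auto simp: algebra_simps power_add)

lemma qfact_nz: assumes nz: "\<And>i. i > 0 \<Longrightarrow> qint q i \<noteq> 0" shows "qfact q n \<noteq> 0"
  using nz by (simp add: qfact_def)

lemma qpascal: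
  assumes nz: "\<And>i. i > 0 \<Longrightarrow> qint q i \<noteq> 0" and k: "0 < k" "k \<le> n"
  shows "qbinom q (Suc n) k = qbinom q n (k - 1) + q ^ k * qbinom q n k"
proof -
  obtain j where j: "k = Suc j" using k by (cases k) auto
  obtain r where r: "n = k + r" using k by (metis le_add_diff_inverse)
  have e1: "Suc n - k = Suc r" "n - (k - 1) = Suc r" "n - k = r" using r j by auto
  have s: "qint q (Suc n) = qint q k + q ^ k * qint q (Suc r)"
    using qint_add[of q k "Suc r"] r by simp
  have F1: "qfact q k = qfact q j * qint q k" using j qfact_Suc by simp
  have F2: "qfact q (Suc r) = qfact q r * qint q (Suc r)" by (rule qfact_Suc)
  have nzs: "qfact q j \<noteq> 0" "qfact q r \<noteq> 0" "qint q k \<noteq> 0" "qint q (Suc r) \<noteq> 0"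
    using qfact_nz[OF nz] nz k by auto
  show ?thesis unfolding qbinom_def e1 qfact_Suc s F1 F2 using nzs j
    by (simp add: field_simps)
qed

lemma qbinom_0: assumes nz: "\<And>i. i > 0 \<Longrightarrow> qint q i \<noteq> 0" shows "qbinom q n 0 = 1"
  using qfact_nz[OF nz, of n] by (simp add: qbinom_def qfact_def)

lemma qbinom_n: assumes nz: "\<And>i. i > 0 \<Longrightarrow> qint q i \<noteq> 0" shows "qbinom q n n = 1"
  using qfact_nz[OF nz, of n] by (simp add: qbinom_def qfact_def)

definition G :: "'a::field \<Rightarrow> 'a poly \<Rightarrow> nat \<Rightarrow> 'a poly" where
  "G q U k = (\<Prod>i<k. U - [:q ^ i:])"

lemma gauss:
  assumes nz: "\<And>i. i > 0 \<Longrightarrow> qint q i \<noteq> 0"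
  shows "U ^ n = (\<Sum>k\<le>n. smult (qbinom q n k) (G q U k))"
proof (induction n)
  case 0 then show ?case by (simp add: G_def qbinom_0[OF nz])
next
  case (Suc n)
  define e where "e k = (if k \<le> n then qbinom q n k else 0)" for k
  have pas: "qbinom q (Suc n) k = (if k = 0 then 0 else e (k - 1)) + q ^ k * e k" if kk: "k \<le> Suc n" for k
  proof -
    consider "k = 0" | "k = Suc n" | "0 < k" "k \<le> n" using kk by (cases "k = Suc n") auto
    then show ?thesis
    proof cases
      case 1 then show ?thesis by (simp add: e_def qbinom_0[OF nz])
    next
      case 2 then show ?thesis by (simp add: e_def qbinom_n[OF nz])
    next
      case 3 then show ?thesis using qpascal[OF nz 3] by (simp add: e_def)
    qed
  qed
  have UG: "U * G q U k = G q U (Suc k) + smult (q ^ k) (G q U k)" for k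
    by (simp add: G_def algebra_simps)
  have "U ^ Suc n = (\<Sum>k\<le>n. smult (e k) (G q U (Suc k))) + (\<Sum>k\<le>n. smult (q ^ k * e k) (G q U k))"
    by (simp add: Suc e_def sum_distrib_left mult_smult_right UG smult_add_right sum.distrib smult_smult mult.commute)
  also have "(\<Sum>k\<le>n. smult (e k) (G q U (Suc k))) = (\<Sum>k\<le>Suc n. smult (if k = 0 then 0 else e (k - 1)) (G q U k))"
    by (subst sum.atMost_Suc_shift) simp
  also have "(\<Sum>k\<le>n. smult (q ^ k * e k) (G q U k)) = (\<Sum>k\<le>Suc n. smult (q ^ k * e k) (G q U k))"
    by (simp add: e_def)
  also have "(\<Sum>k\<le>Suc n. smult (if k = 0 then 0 else e (k - 1)) (G q U k)) + (\<Sum>k\<le>Suc n. smult (q ^ k * e k) (G q U k))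
      = (\<Sum>k\<le>Suc n. smult (qbinom q (Suc n) k) (G q U k))"
    by (simp add: sum.distrib[symmetric] pas smult_add_left[symmetric] del: sum.atMost_Suc)
  finally show ?case .
qed



lemma coeff_lin_pow: "coeff ([:1, c:] ^ n) m = of_nat (n choose m) * c ^ m"
proof -
  have "[:1, c:] = monom c 1 + 1" by (simp add: monom_altdef one_pCons)
  then have "[:1, c:] ^ n = (\<Sum>k\<le>n. of_nat (n choose k) * monom c 1 ^ k * 1 ^ (n - k))"
    by (simp add: binomial_ring)
  also have "\<dots> = (\<Sum>k\<le>n. monom (of_nat (n choose k) * c ^ k) k)"
    by (simp add: monom_power of_nat_poly smult_monom flip: smult_monom)
  finally show ?thesis by (simp add: coeff_sum binomial_eq_0)
qed

lemma G_eq: "G q [:1, q - 1:] k = smult ((q - 1) ^ k) (\<Prod>i<k. [: - qint q i, 1 :])"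
proof (induction k)
  case 0 then show ?case by (simp add: G_def)
next
  case (Suc k)
  have "[:1, q - 1:] - [:q ^ k:] = smult (q - 1) [: - qint q k, 1 :]"
    by (cases "q = 1") (auto simp: qint_def field_simps)
  have "G q [:1, q - 1:] (Suc k) = G q [:1, q - 1:] k * ([:1, q - 1:] - [:q ^ k:])"
    by (simp add: G_def)
  also have "\<dots> = smult ((q - 1) ^ Suc k) (\<Prod>i<Suc k. [: - qint q i, 1 :])"
    unfolding Suc.IH \<open>[:1, q - 1:] - [:q ^ k:] = _\<close> by (simp only: mult_smult_right mult_smult_left smult_smult power_Suc prod.lessThan_Suc)
  finally show ?case .
qed

lemma coeffG: "coeff (G q [:1, q - 1:] k) m = (q - 1) ^ k * s1q q k m"
  by (simp only: G_eq coeff_smult s1q_def)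

lemma s1q_zero: "k < m \<Longrightarrow> s1q q k m = 0"
proof -
  assume "k < m"
  moreover have "degree (\<Prod>i<k. [: - qint q i, 1 :]) \<le> k"
    by (rule order.trans[OF degree_prod_sum_le]) (auto intro: order.trans[OF sum_mono[where g = "\<lambda>_. 1"]])
  ultimately show ?thesis unfolding s1q_def by (intro coeff_eq_0) auto
qed

lemma coeff_identity:
  assumes nz: "\<And>i. i > 0 \<Longrightarrow> qint q i \<noteq> 0"
  shows "of_nat (n choose m) * (q - 1) ^ m = (\<Sum>k = m..n. (q - 1) ^ k * qbinom q n k * s1q q k m)"
proof -
  have "of_nat (n choose m) * (q - 1) ^ m = coeff ([:1, q - 1:] ^ n) m" by (simp add: coeff_lin_pow)
  also have "\<dots> = (\<Sum>k\<le>n. (q - 1) ^ k * qbinom q n k * s1q q k m)"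
    apply (subst gauss[OF nz])
     apply simp
    apply (subst coeff_sum)
    apply (rule sum.cong, rule refl)
    apply (subst coeff_smult)
    apply (subst coeffG)
    apply (simp only: mult_ac)
    done
  also have "\<dots> = (\<Sum>k = m..n. (q - 1) ^ k * qbinom q n k * s1q q k m)"
    by (rule sum.mono_neutral_right) (auto simp: s1q_zero)
  finally show ?thesis .
qed



locale cp =
  fixes nabs :: "'a::field \<Rightarrow> real" and p :: nat
  assumes cp: "is_Cp nabs p" and pp: "prime p"
begin

lemma nn: "0 \<le> nabs x" using cp by (simp add: is_Cp_def)
lemma n0: "nabs x = 0 \<longleftrightarrow> x = 0" using cp by (simp add: is_Cp_def)
lemma nmult: "nabs (x * y) = nabs x * nabs y" using cp by (simp add: is_Cp_def)
lemma nadd: "nabs (x + y) \<le> max (nabs x) (nabs y)" using cp by (simp add: is_Cp_def)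
lemma np: "nabs (of_nat p) = 1 / real p" using cp by (simp add: is_Cp_def)

lemma nz0: "nabs 0 = 0" using n0 by simp

lemma n1: "nabs 1 = 1"
proof -
  have "nabs 1 = nabs 1 * nabs 1" using nmult[of 1 1] by simp
  moreover have "nabs 1 \<noteq> 0" using n0 by simp
  ultimately show ?thesis by simp
qed

lemma nm1: "nabs (-1) = 1"
proof -
  have "nabs (-1) * nabs (-1) = 1" using nmult[of "-1" "-1"] n1 by simp
  then show ?thesis using nn[of "-1"] by (metis abs_of_nonneg abs_square_eq_1 power2_eq_square)
qed

lemma nneg: "nabs (- x) = nabs x"
  using nmult[of "-1" x] nm1 by simp

lemma npow: "nabs (x ^ k) = nabs x ^ k"
  by (induction k) (auto simp: n1 nmult)

lemma nnat: "nabs (of_nat k) \<le> 1"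
proof (induction k)
  case 0 then show ?case using nz0 by simp
next
  case (Suc k)
  then show ?case using nadd[of 1 "of_nat k"] n1 by (simp add: add.commute)
qed

lemma nint: "nabs (of_int z) \<le> 1"
proof (cases "z \<ge> 0")
  case True
  then have "(of_int z :: 'a) = of_nat (nat z)" by (metis of_nat_nat)
  then show ?thesis using nnat[of "nat z"] by metis
next
  case False
  then have "(of_int z :: 'a) = - of_nat (nat (- z))"
    by (metis add.inverse_inverse le_cases neg_0_le_iff_le of_int_minus of_nat_nat)
  then show ?thesis using nnat[of "nat (- z)"] nneg[of "of_nat (nat (- z))"] by metis
qed

lemma p_gt: "real p \<ge> 2" using pp prime_ge_2_nat by auto

lemma ncop: assumes "\<not> p dvd k" shows "nabs (of_nat k) = 1"
proof -
  have "coprime p k" using prime_imp_coprime[OF pp assms] .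
  then have "coprime (int k) (int p)" by (simp add: coprime_commute)
  then have "gcd (int k) (int p) = 1" by simp
  then obtain u v where uv: "u * int k + v * int p = 1" using bezout_int[of "int k" "int p"] by auto
  then have "of_int (u * int k + v * int p) = (1::'a)" by simp
  then have eq: "(of_int u * of_nat k + of_int v * of_nat p :: 'a) = 1" by simp
  have "nabs (of_int u * of_nat k + of_int v * of_nat p :: 'a) \<le> max (nabs (of_int u * of_nat k :: 'a)) (nabs (of_int v * of_nat p :: 'a))"
    by (rule nadd)
  then have "1 \<le> max (nabs (of_int u * of_nat k)) (nabs (of_int v * of_nat p :: 'a))"
    unfolding eq n1 .
  moreover have "nabs (of_int u * of_nat k :: 'a) \<le> nabs (of_nat k :: 'a)"
    using nint[of u] nn[of "of_nat k :: 'a"] nn[of "of_int u :: 'a"] by (simp add: nmult mult_left_le_one_le)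
  moreover have "nabs (of_int v * of_nat p :: 'a) \<le> 1 / real p"
    using nint[of v] nn[of "of_int v :: 'a"] nn[of "of_nat p :: 'a"] np p_gt by (simp add: nmult divide_right_mono)
  moreover have "1 / real p < 1" using p_gt by simp
  ultimately have "1 \<le> nabs (of_nat k :: 'a)" by linarith
  then show ?thesis using nnat[of k] by simp
qed

lemma nstrict: assumes "nabs x < nabs y" shows "nabs (y + x) = nabs y"
proof -
  have "nabs y \<le> max (nabs (y + x)) (nabs (- x))" using nadd[of "y + x" "- x"] by simp
  then have "nabs y \<le> nabs (y + x)" using assms nneg by (auto simp: max_def split: if_splits)
  moreover have "nabs (y + x) \<le> nabs y" using nadd[of y x] assms by simp
  ultimately show ?thesis by simp
qed

lemma nsum_lt: assumes "finite A" "0 < c" "\<And>x. x \<in> A \<Longrightarrow> nabs (f x) < c"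
  shows "nabs (sum f A) < c"
  using assms
proof (induction A rule: finite_induct)
  case empty then show ?case using nz0 by simp
next
  case (insert x F)
  have a: "nabs (f x) < c" "nabs (sum f F) < c" using insert by auto
  have "nabs (f x + sum f F) \<le> max (nabs (f x)) (nabs (sum f F))" by (rule nadd)
  then show ?case using a insert(1,2) by (simp add: max_less_iff_conj)
qed

lemma nq_pow: assumes "nabs (1 - q) < 1" shows "nabs (1 - q ^ j) \<le> nabs (1 - q)"
proof (induction j)
  case 0 then show ?case using nz0 nn by simp
next
  case (Suc j)
  have nq: "nabs q \<le> 1"
  proof -
    have "nabs q \<le> max (nabs 1) (nabs (- (1 - q)))" using nadd[of 1 "- (1 - q)"] by simp
    moreover have "nabs (q - 1) = nabs (1 - q)" using nneg[of "1 - q"] by simp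
    ultimately show ?thesis using n1 assms by simp
  qed
  have e: "1 - q ^ Suc j = (1 - q ^ j) + q ^ j * (1 - q)" by (simp add: algebra_simps)
  have "nabs (q ^ j * (1 - q)) \<le> nabs (1 - q)"
    using nq nn by (simp add: nmult npow mult_left_le_one_le power_le_one)
  then show ?case using nadd[of "1 - q ^ j" "q ^ j * (1 - q)"] Suc unfolding e by simp
qed

definition c :: real where "c = real p powr (- 1 / (real p - 1))"

lemma c_pos: "0 < c" using p_gt by (simp add: c_def)
lemma c_lt1: "c < 1" using p_gt by (simp add: c_def powr_less_one)
lemma c_pow: "c ^ (p - 1) = 1 / real p"
proof -
  have "c ^ (p - 1) = real p powr ((- 1 / (real p - 1)) * real (p - 1))"
    using p_gt by (simp add: c_def powr_realpow [symmetric] powr_powr)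
  also have "(- 1 / (real p - 1)) * real (p - 1) = -1" using p_gt by (simp add: of_nat_diff)
  finally show ?thesis using p_gt by (simp add: powr_minus divide_inverse)
qed

end


context cp begin

lemma geomp: assumes q: "nabs (1 - q) < c" shows "nabs (\<Sum>j<p. q ^ j) = 1 / real p"
proof -
  define y where "y = 1 - q"
  have qy: "q = 1 - y" by (simp add: y_def)
  have ny: "nabs y < c" using q by (simp add: y_def)
  obtain p' where p': "p = Suc p'" using p_gt by (cases p) auto
  define f where "f i = of_nat (p choose Suc i) * (- y) ^ i" for i
  have ST: "(\<Sum>j<p. q ^ j) = (\<Sum>i<p. f i)"
  proof (cases "y = 0")
    case True
    then show ?thesis by (simp add: qy f_def p' sum.lessThan_Suc_shift del: sum.lessThan_Suc)
  next
    case False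
    have "(1 - y) ^ p = (\<Sum>k\<le>p. of_nat (p choose k) * (- y) ^ k * 1 ^ (p - k))"
      using binomial_ring[of "- y" 1 p] by simp
    also have "\<dots> = 1 + (- y) * (\<Sum>i<p. f i)"
      by (subst sum.atMost_shift) (simp add: f_def sum_distrib_left mult_ac)
    finally have "y * (\<Sum>i<p. f i) = 1 - (1 - y) ^ p" by simp
    also have "\<dots> = y * (\<Sum>j<p. q ^ j)" using one_diff_power_eq[of q p] by (simp add: qy)
    finally show ?thesis using False by simp
  qed
  have small: "nabs (f (Suc i)) < 1 / real p" if i: "i < p'" for i
  proof -
    have nyl: "nabs y < 1" using ny c_lt1 by simp
    have yp: "nabs y ^ Suc i < 1" using power_strict_mono[of "nabs y" 1 "Suc i"] nyl nn[of y] by simp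
    have e: "nabs (f (Suc i)) = nabs (of_nat (p choose Suc (Suc i)) :: 'a) * nabs y ^ Suc i"
      by (simp add: f_def nmult npow nneg)
    show ?thesis
    proof (cases "Suc (Suc i) < p")
      case True
      have "p dvd (p choose Suc (Suc i))" by (rule dvd_choose_prime) (use True pp in auto)
      then obtain b where b: "p choose Suc (Suc i) = p * b" by blast
      have "nabs (of_nat (p choose Suc (Suc i)) :: 'a) \<le> 1 / real p"
        using nnat[of b] nn[of "of_nat b :: 'a"] p_gt unfolding b of_nat_mult nmult np
        by (simp add: divide_right_mono)
      then have "nabs (f (Suc i)) \<le> 1 / real p * nabs y ^ Suc i"
        unfolding e using nn[of y] by (intro mult_right_mono) auto
      also have "\<dots> < 1 / real p" using yp p_gt by (simp add: divide_strict_right_mono)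
      finally show ?thesis .
    next
      case False
      then have pi: "Suc (Suc i) = p" using i p' by simp
      then have "nabs (f (Suc i)) = nabs y ^ (p - 1)" unfolding e using n1 by (simp flip: pi)
      also have "\<dots> < c ^ (p - 1)"
        by (rule power_strict_mono) (use ny nn[of y] pi in auto)
      finally show ?thesis using c_pow by simp
    qed
  qed
  have "(\<Sum>i<p. f i) = of_nat p + (\<Sum>i<p'. f (Suc i))"
    by (simp add: p' sum.lessThan_Suc_shift f_def del: sum.lessThan_Suc)
  moreover have "nabs (\<Sum>i<p'. f (Suc i)) < nabs (of_nat p :: 'a)"
    unfolding np by (rule nsum_lt) (use small p_gt in auto)
  ultimately show ?thesis using ST nstrict np by simp
qed

lemma geom_mult: "(\<Sum>j<p * m. (q::'a) ^ j) = (\<Sum>j<p. q ^ j) * (\<Sum>i<m. (q ^ p) ^ i)"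
proof (induction m)
  case 0 then show ?case by simp
next
  case (Suc m)
  have "(\<Sum>j<p * Suc m. q ^ j) = qint q (p * m + p)" by (simp add: qint_geom add.commute)
  also have "\<dots> = (\<Sum>j<p * m. q ^ j) + q ^ (p * m) * (\<Sum>j<p. q ^ j)"
    using qint_add[of q "p * m" p] by (simp add: qint_geom)
  moreover have "q ^ (p * m) = (q ^ p) ^ m" by (simp add: power_mult)
  ultimately show ?case using Suc by (simp add: algebra_simps)
qed

lemma geom_nz: "0 < k \<Longrightarrow> nabs (1 - q) < c \<Longrightarrow> (\<Sum>j<k. q ^ j) \<noteq> 0"
proof (induction k arbitrary: q rule: less_induct)
  case (less k)
  show ?case
  proof (cases "p dvd k")
    case True
    then obtain m where m: "k = p * m" by blast
    have mpos: "0 < m" "m < k" using less.prems(1) m p_gt by auto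
    have "nabs (1 - q ^ p) < c"
      using nq_pow[of q p] less.prems(2) c_lt1 by simp
    then have A: "(\<Sum>i<m. (q ^ p) ^ i) \<noteq> 0" using less.IH[OF mpos(2) mpos(1)] by simp
    have B: "(\<Sum>j<p. q ^ j) \<noteq> 0" using geomp[OF less.prems(2)] p_gt nz0 by auto
    show ?thesis unfolding m geom_mult using A B by simp
  next
    case False
    have eq1: "(\<Sum>j<k. q ^ j) = of_nat k + - (\<Sum>j<k. 1 - q ^ j)"
      by (simp add: sum_subtractf)
    have h: "nabs (1 - q ^ j) < 1" for j
      using nq_pow[of q j] less.prems(2) c_lt1 by linarith
    moreover have "nabs (- (\<Sum>j<k. 1 - q ^ j)) < nabs (of_nat k :: 'a)"
      unfolding nneg ncop[OF False]
      by (rule nsum_lt) (use h in auto)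
    ultimately have "nabs (\<Sum>j<k. q ^ j) = 1" unfolding eq1 using nstrict[of "- (\<Sum>j<k. 1 - q ^ j)" "of_nat k"] ncop[OF False] by simp
    then show ?thesis using nz0 by auto
  qed
qed

lemma qint_nz: "0 < i \<Longrightarrow> nabs (1 - q) < c \<Longrightarrow> qint q i \<noteq> 0"
  unfolding qint_geom by (rule geom_nz)

end

theorem mainTheorem2:
  fixes nabs :: "'a::field \<Rightarrow> real" and p :: nat and q :: 'a and n :: nat
  assumes "prime p" and "odd p"
    and "is_Cp nabs p"
    and "nabs (1 - q) < real p powr (- 1 / (real p - 1))"
  shows "(\<Sum>m = 0..n. of_nat (n choose m) * (q - 1) ^ m * qEuler nabs p q m)
       = (\<Sum>m = 0..n. \<Sum>k = m..n. (q - 1) ^ k * qbinom q n k * s1q q k m * qEuler nabs p q m)"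
proof -
  interpret cp nabs p using assms by unfold_locales auto
  have nz: "qint q i \<noteq> 0" if "0 < i" for i
    using qint_nz[OF that] assms(4) by (simp add: c_def)
  show ?thesis
    by (simp add: coeff_identity[OF nz] sum_distrib_right)
qed

end
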